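(* Let $f:\mathbb{R}\to\mathbb{R}^T$ be a function each of whose outputs $f_t$ is continuous piecewise linear and interpolates the dataset $\mathcal{D}_t=\{(x_i,y_{it})\}_{i=1}^N$. Suppose that at some point $\tilde x$ lying strictly between consecutive data points, one or more of the outputs $f_t$ has a knot. Let $\tilde x_1<\tilde x<\tilde x_2$ be the closest knots of $f$ (in any output) before and after $\tilde x$, let $\tau=\frac{\tilde x-\tilde x_1}{\tilde x_2-\tilde x_1}$, and suppose the slopes of each $f_t$ are: $a_t$ immediately to the left of $\tilde x_1$, $b_t+\delta_t$ on $(\tilde x_1,\tilde x)$, $b_t-\frac{\tau}{1-\tau}\delta_t$ on $(\tilde x,\tilde x_2)$, and $c_t$ immediately to the right of $\tilde x_2$. Let $\mathbf{a},\mathbf{b},\mathbf{c},\boldsymbol\delta\in\mathbb{R}^T$ collect these values. Then replacing $f$ on $[\tilde x_1,\tilde x_2]$ by the straight line connecting $f(\tilde x_1)$ and $f(\tilde x_2)$ (i.e., removing the knot at $\tilde x$) does not increase $R(f)$. Furthermore, if $\mathbf{a}-\mathbf{b}$ and $\mathbf{b}-\mathbf{c}$ are not aligned, doing so strictly decreases $R(f)$.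
   Context: Networks: $f_\theta(x)=\sum_{k=1}^K \mathbf{v}_k(w_kx+b_k)_+ + \mathbf{a}_0x+\mathbf{c}_0$ with $w_k,b_k\in\mathbb{R}$, $\mathbf{v}_k,\mathbf{a}_0,\mathbf{c}_0\in\mathbb{R}^T$, $K$ a fixed width, $(z)_+=\max\{0,z\}$. The representational cost of a function $f:\mathbb{R}\to\mathbb{R}^T$ is $R(f)=\inf_\theta \sum_{k=1}^K\|\mathbf{v}_k\|_2$ subject to $|w_k|=1$ for all $k$ and $f=f_\theta$. A knot of $f_t$ is a point where the slope of $f_t$ changes. Two vectors $\mathbf{u}_1,\mathbf{u}_2$ are aligned if $\mathbf{u}_1^\top\mathbf{u}_2=\|\mathbf{u}_1\|_2\|\mathbf{u}_2\|_2$. By construction the straight line from $(\tilde x_1,f_t(\tilde x_1))$ to $(\tilde x_2,f_t(\tilde x_2))$ has slope $b_t$. *)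

theory Defs
  imports "HOL-Analysis.Analysis"
begin

definition netfun ::
  "nat \<Rightarrow> (nat \<Rightarrow> real) \<Rightarrow> (nat \<Rightarrow> real) \<Rightarrow> (nat \<Rightarrow> real^'T) \<Rightarrow> real^'T \<Rightarrow> real^'T
     \<Rightarrow> real \<Rightarrow> real^'T" where
  "netfun K w b v a0 c0 x = (\<Sum>k<K. max 0 (w k * x + b k) *\<^sub>R v k) + x *\<^sub>R a0 + c0"

text \<open>Representational cost R(f) (infimum over an empty set is +infinity).\<close>
definition repcost :: "nat \<Rightarrow> (real \<Rightarrow> real^'T) \<Rightarrow> ereal" where
  "repcost K f = (INF p \<in> {(w, b, v, a0, c0). (\<forall>k<K. \<bar>w k\<bar> = 1) \<and> f = netfun K w b v a0 c0}.
      (case p of (w, b, v, a0, c0) \<Rightarrow> ereal (\<Sum>k<K. norm (v k))))"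

definition locally_affine_at :: "(real \<Rightarrow> real) \<Rightarrow> real \<Rightarrow> bool" where
  "locally_affine_at g x \<longleftrightarrow> (\<exists>e>0. \<exists>m c. \<forall>y. \<bar>y - x\<bar> < e \<longrightarrow> g y = m * y + c)"

definition knot :: "(real \<Rightarrow> real) \<Rightarrow> real \<Rightarrow> bool" where
  "knot g x \<longleftrightarrow> \<not> locally_affine_at g x"

definition cpwl :: "(real \<Rightarrow> real) \<Rightarrow> bool" where
  "cpwl g \<longleftrightarrow> continuous_on UNIV g \<and> (\<exists>S. finite S \<and> (\<forall>x. x \<notin> S \<longrightarrow> locally_affine_at g x))"

definition aligned :: "real^'T \<Rightarrow> real^'T \<Rightarrow> bool" where
  "aligned u1 u2 \<longleftrightarrow> inner u1 u2 = norm u1 * norm u2"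

end

theory Submission
  imports Defs
begin

definition ramp :: "real \<Rightarrow> real" where "ramp x = max 0 x"

definition cnet :: "nat \<Rightarrow> (nat \<Rightarrow> real) \<Rightarrow> (nat \<Rightarrow> real^'T) \<Rightarrow> real^'T \<Rightarrow> real^'T \<Rightarrow> real \<Rightarrow> real^'T" where
  "cnet K p v A C y = (\<Sum>k<K. ramp (y - p k) *\<^sub>R v k) + y *\<^sub>R A + C"

lemma net_to_cnet:
  assumes "\<forall>k<K. \<bar>w k\<bar> = 1"
  shows "netfun K w b v a0 c0 = cnet K (\<lambda>k. - b k * w k) v
     (a0 - (\<Sum>k<K. if w k = -1 then v k else 0))
     (c0 + (\<Sum>k<K. if w k = -1 then b k *\<^sub>R v k else 0))"
proof
  fix x
  have e: "max 0 (w k * x + b k) *\<^sub>R v k = ramp (x - (- b k * w k)) *\<^sub>R v k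
      - x *\<^sub>R (if w k = -1 then v k else 0) + (if w k = -1 then b k *\<^sub>R v k else 0)" if "k < K" for k
  proof -
    have "w k = 1 \<or> w k = -1" using assms that by auto
    then show ?thesis
      by (auto simp: ramp_def max_def algebra_simps)
  qed
  have "netfun K w b v a0 c0 x = (\<Sum>k<K. ramp (x - (- b k * w k)) *\<^sub>R v k
      - x *\<^sub>R (if w k = -1 then v k else 0) + (if w k = -1 then b k *\<^sub>R v k else 0)) + x *\<^sub>R a0 + c0"
    unfolding netfun_def using e by simp
  also have "\<dots> = cnet K (\<lambda>k. - b k * w k) v
     (a0 - (\<Sum>k<K. if w k = -1 then v k else 0))
     (c0 + (\<Sum>k<K. if w k = -1 then b k *\<^sub>R v k else 0)) x"
    unfolding cnet_def by (simp add: sum.distrib sum_subtractf scaleR_sum_right algebra_simps)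
  finally show "netfun K w b v a0 c0 x = cnet K (\<lambda>k. - b k * w k) v
     (a0 - (\<Sum>k<K. if w k = -1 then v k else 0))
     (c0 + (\<Sum>k<K. if w k = -1 then b k *\<^sub>R v k else 0)) x" .
qed

lemma cnet_to_net: "cnet K p v A C = netfun K (\<lambda>_. 1) (\<lambda>k. - p k) v A C"
  by (auto simp: cnet_def netfun_def ramp_def fun_eq_iff)

lemma cnet_cont: "continuous_on S (cnet K p v A C)"
  unfolding cnet_def ramp_def by (intro continuous_intros)

lemma affine_piece:
  fixes f :: "real \<Rightarrow> 'a::banach"
  assumes "continuous_on {l..u} f"
    and "\<And>y. y \<in> {l<..<u} \<Longrightarrow> (f has_vector_derivative m) (at y)"
    and "y \<in> {l..u}"
  shows "f y = f l + (y - l) *\<^sub>R m"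
proof -
  have "f y - (y - l) *\<^sub>R m = f l - (l - l) *\<^sub>R m"
  proof (rule has_derivative_zero_unique_strong_interval[where k="{l,u}" and f="\<lambda>y. f y - (y - l) *\<^sub>R m"])
    show "continuous_on {l..u} (\<lambda>y. f y - (y - l) *\<^sub>R m)"
      using assms(1) by (intro continuous_intros) auto
    fix x assume x: "x \<in> {l..u} - {l,u}"
    then have "(f has_vector_derivative m) (at x within {l..u})"
      using assms(2) has_vector_derivative_at_within by force
    moreover have "((\<lambda>y. (y - l) *\<^sub>R m) has_vector_derivative (1 *\<^sub>R m)) (at x within {l..u})"
      by (auto intro!: derivative_eq_intros)
    ultimately have "((\<lambda>y. f y - (y - l) *\<^sub>R m) has_vector_derivative (m - 1 *\<^sub>R m)) (at x within {l..u})"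
      by (intro has_vector_derivative_diff)
    then show "((\<lambda>y. f y - (y - l) *\<^sub>R m) has_derivative (\<lambda>h. 0)) (at x within {l..u})"
      by (simp add: has_vector_derivative_def)
  qed (use assms in auto)
  then show ?thesis by (simp add: algebra_simps)
qed

definition Jn :: "nat \<Rightarrow> (nat \<Rightarrow> real) \<Rightarrow> (nat \<Rightarrow> real^'T) \<Rightarrow> real \<Rightarrow> real^'T" where
  "Jn K p v x = (\<Sum>k<K. if p k = x then v k else 0)"

lemma ramp_sd:
  assumes "h > 0" "q \<noteq> x \<Longrightarrow> h < \<bar>q - x\<bar>"
  shows "ramp (x + h - q) - 2 * ramp (x - q) + ramp (x - h - q) = (if q = x then h else 0)"
  using assms by (cases "q = x"; cases "q < x") (auto simp: ramp_def max_def)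

lemma secdiff:
  "eventually (\<lambda>h. cnet K p v A C (x + h) - 2 *\<^sub>R cnet K p v A C x + cnet K p v A C (x - h) = h *\<^sub>R Jn K p v x) (at_right 0)"
proof -
  have "eventually (\<lambda>h. h > 0 \<and> (p k \<noteq> x \<longrightarrow> h < \<bar>p k - x\<bar>)) (at_right 0)" for k
  proof (cases "p k = x")
    case True then show ?thesis by (auto simp: eventually_at_right_field intro: exI[of _ 1])
  next
    case False
    then show ?thesis unfolding eventually_at_right_field
      by (intro exI[of _ "\<bar>p k - x\<bar>"]) auto
  qed
  then have "eventually (\<lambda>h. \<forall>k\<in>{..<K}. h > 0 \<and> (p k \<noteq> x \<longrightarrow> h < \<bar>p k - x\<bar>)) (at_right 0)"
    by (intro eventually_ball_finite) auto
  then show ?thesis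
  proof (rule eventually_mono)
    fix h assume H: "\<forall>k\<in>{..<K}. h > 0 \<and> (p k \<noteq> x \<longrightarrow> h < \<bar>p k - x\<bar>)"
    have "cnet K p v A C (x + h) - 2 *\<^sub>R cnet K p v A C x + cnet K p v A C (x - h)
      = (\<Sum>k<K. (ramp (x + h - p k) - 2 * ramp (x - p k) + ramp (x - h - p k)) *\<^sub>R v k)"
    proof -
      have L: "((x + h) *\<^sub>R A + C) - 2 *\<^sub>R (x *\<^sub>R A + C) + ((x - h) *\<^sub>R A + C) = 0"
        by (simp add: vec_eq_iff algebra_simps)
      have S: "(\<Sum>k<K. ramp (x + h - p k) *\<^sub>R v k) - 2 *\<^sub>R (\<Sum>k<K. ramp (x - p k) *\<^sub>R v k) + (\<Sum>k<K. ramp (x - h - p k) *\<^sub>R v k)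
         = (\<Sum>k<K. (ramp (x + h - p k) - 2 * ramp (x - p k) + ramp (x - h - p k)) *\<^sub>R v k)"
        by (simp add: scaleR_sum_right sum_subtractf sum.distrib scaleR_diff_left scaleR_add_left)
      have "cnet K p v A C (x + h) - 2 *\<^sub>R cnet K p v A C x + cnet K p v A C (x - h) =
        ((\<Sum>k<K. ramp (x + h - p k) *\<^sub>R v k) - 2 *\<^sub>R (\<Sum>k<K. ramp (x - p k) *\<^sub>R v k) + (\<Sum>k<K. ramp (x - h - p k) *\<^sub>R v k))
        + (((x + h) *\<^sub>R A + C) - 2 *\<^sub>R (x *\<^sub>R A + C) + ((x - h) *\<^sub>R A + C))"
        unfolding cnet_def by (simp add: scaleR_right_distrib scaleR_right_diff_distrib algebra_simps del: scaleR_add_left)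
      then show ?thesis using L S by simp
    qed
    also have "\<dots> = (\<Sum>k<K. h *\<^sub>R (if p k = x then v k else 0))"
      by (rule sum.cong) (use H ramp_sd in auto)
    finally show "cnet K p v A C (x + h) - 2 *\<^sub>R cnet K p v A C x + cnet K p v A C (x - h) = h *\<^sub>R Jn K p v x"
      by (simp add: Jn_def scaleR_sum_right)
  qed
qed

lemma noknot:
  assumes "\<forall>k<K. p k \<noteq> x"
  shows "locally_affine_at (\<lambda>y. cnet K p v A C y $ t) x"
proof -
  have "eventually (\<lambda>y. ramp (y - p k) = (if p k < x then y - p k else 0)) (nhds x)" if "k < K" for k
  proof (cases "p k < x")
    case True
    have "eventually (\<lambda>y. y \<in> {p k<..}) (nhds x)"
      by (rule eventually_nhds_in_open) (use True in auto)
    then show ?thesis by (rule eventually_mono) (use True in \<open>auto simp: ramp_def\<close>)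
  next
    case False
    then have "x < p k" using assms that by force
    have "eventually (\<lambda>y. y \<in> {..<p k}) (nhds x)"
      by (rule eventually_nhds_in_open) (use \<open>x < p k\<close> in auto)
    then show ?thesis by (rule eventually_mono) (use False in \<open>auto simp: ramp_def\<close>)
  qed
  then have "eventually (\<lambda>y. \<forall>k\<in>{..<K}. ramp (y - p k) = (if p k < x then y - p k else 0)) (nhds x)"
    by (intro eventually_ball_finite) auto
  then obtain e where e: "e > 0" "\<And>y. dist y x < e \<Longrightarrow> \<forall>k\<in>{..<K}. ramp (y - p k) = (if p k < x then y - p k else 0)"
    unfolding eventually_nhds_metric by blast
  show ?thesis unfolding locally_affine_at_def
  proof (intro exI conjI allI impI)
    show "e > 0" by fact
    fix y assume "\<bar>y - x\<bar> < e"
    then have R: "\<forall>k\<in>{..<K}. ramp (y - p k) = (if p k < x then y - p k else 0)" using e by (simp add: dist_real_def)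
    have "cnet K p v A C y $ t = (\<Sum>k<K. ramp (y - p k) * v k $ t) + y * A $ t + C $ t"
      by (simp add: cnet_def sum_component)
    also have "\<dots> = (\<Sum>k<K. (if p k < x then y * v k $ t - p k * v k $ t else 0)) + y * A $ t + C $ t"
      by (intro arg_cong2[where f="(+)"] refl sum.cong) (use R in \<open>auto simp: algebra_simps\<close>)
    also have "\<dots> = ((\<Sum>k<K. if p k < x then v k $ t else 0) + A $ t) * y
        + ((\<Sum>k<K. if p k < x then - p k * v k $ t else 0) + C $ t)"
    proof -
      have "(\<Sum>k<K. (if p k < x then y * v k $ t - p k * v k $ t else 0)) =
         y * (\<Sum>k<K. if p k < x then v k $ t else 0) + (\<Sum>k<K. if p k < x then - p k * v k $ t else 0)"
        unfolding sum_distrib_left sum.distrib[symmetric] by (rule sum.cong) auto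
      then show ?thesis by (simp add: algebra_simps)
    qed
    finally show "cnet K p v A C y $ t = ((\<Sum>k<K. if p k < x then v k $ t else 0) + A $ t) * y
        + ((\<Sum>k<K. if p k < x then - p k * v k $ t else 0) + C $ t)" .
  qed
qed

lemma ev_pos: "eventually (\<lambda>h::real. h > 0) (at_right 0)"
  by (auto simp: eventually_at_right_field intro: exI[of _ 1])

lemma left_quot:
  fixes f :: "real \<Rightarrow> 'a::real_normed_vector"
  assumes "(f has_vector_derivative a) (at_left x)"
  shows "((\<lambda>h. (1/h) *\<^sub>R (f (x - h) - f x + h *\<^sub>R a)) \<longlongrightarrow> 0) (at_right (0::real))"
proof -
  have L: "((\<lambda>y. (1 / norm(y - x)) *\<^sub>R (f y - (f x + (y - x) *\<^sub>R a))) \<longlongrightarrow> 0) (at_left x)"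
    using assms unfolding has_vector_derivative_def has_derivative_within by blast
  have F: "filterlim (\<lambda>h. x - h) (at_left x) (at_right 0)"
    unfolding filterlim_at
  proof
    show "((\<lambda>h. x - h) \<longlongrightarrow> x) (at_right 0)"
      by (rule tendsto_eq_intros) (auto intro!: tendsto_eq_intros)
    show "\<forall>\<^sub>F h in at_right 0. x - h \<in> {..<x} \<and> x - h \<noteq> x"
      using ev_pos by (rule eventually_mono) auto
  qed
  have "((\<lambda>h. (1 / norm((x - h) - x)) *\<^sub>R (f (x - h) - (f x + ((x - h) - x) *\<^sub>R a))) \<longlongrightarrow> 0) (at_right (0::real))"
    using filterlim_compose[OF L F] by (simp add: o_def)
  then show ?thesis
    by (rule tendsto_cong[THEN iffD1, rotated]) (use ev_pos in \<open>rule eventually_mono\<close>, auto simp: algebra_simps)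
qed

lemma right_quot:
  fixes f :: "real \<Rightarrow> 'a::real_normed_vector"
  assumes "(f has_vector_derivative c) (at_right x)"
  shows "((\<lambda>h. (1/h) *\<^sub>R (f (x + h) - f x - h *\<^sub>R c)) \<longlongrightarrow> 0) (at_right (0::real))"
proof -
  have L: "((\<lambda>y. (1 / norm(y - x)) *\<^sub>R (f y - (f x + (y - x) *\<^sub>R c))) \<longlongrightarrow> 0) (at_right x)"
    using assms unfolding has_vector_derivative_def has_derivative_within by blast
  have F: "filterlim (\<lambda>h. x + h) (at_right x) (at_right 0)"
    unfolding filterlim_at
  proof
    show "((\<lambda>h. x + h) \<longlongrightarrow> x) (at_right 0)"
      by (rule tendsto_eq_intros) (auto intro!: tendsto_eq_intros)
    show "\<forall>\<^sub>F h in at_right 0. x + h \<in> {x<..} \<and> x + h \<noteq> x"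
      using ev_pos by (rule eventually_mono) auto
  qed
  have "((\<lambda>h. (1 / norm((x + h) - x)) *\<^sub>R (f (x + h) - (f x + ((x + h) - x) *\<^sub>R c))) \<longlongrightarrow> 0) (at_right (0::real))"
    using filterlim_compose[OF L F] by (simp add: o_def)
  then show ?thesis
    by (rule tendsto_cong[THEN iffD1, rotated]) (use ev_pos in \<open>rule eventually_mono\<close>, auto simp: algebra_simps)
qed

lemma tri_ray:
  fixes d u :: "'a::real_inner"
  assumes "d \<noteq> 0" "norm (d + u) = norm d + norm u"
  shows "\<exists>al\<ge>0. d + u = al *\<^sub>R d"
proof -
  have e: "norm d *\<^sub>R u = norm u *\<^sub>R d" using assms(2) norm_triangle_eq by blast
  have "u = (norm u / norm d) *\<^sub>R d"
  proof -
    have "(1 / norm d) *\<^sub>R (norm d *\<^sub>R u) = (1 / norm d) *\<^sub>R (norm u *\<^sub>R d)" using e by simp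
    then show ?thesis using assms(1) by simp
  qed
  then have "d + u = (1 + norm u / norm d) *\<^sub>R d" by (simp add: algebra_simps)
  then show ?thesis by (intro exI[of _ "1 + norm u / norm d"]) auto
qed

lemma gap_nonneg:
  fixes a b c d :: "real^'T"
  assumes "s \<ge> 0"
  shows "norm (b - a) + norm (c - b) \<le> norm (b + d - a) + (1 + s) * norm d + norm (c - b + s *\<^sub>R d)"
proof -
  have 1: "norm (b - a) \<le> norm (b + d - a) + norm d"
    using norm_triangle_ineq4[of "b + d - a" d] by (simp add: algebra_simps)
  have 2: "norm (c - b) \<le> norm (c - b + s *\<^sub>R d) + s * norm d"
    using norm_triangle_ineq4[of "c - b + s *\<^sub>R d" "s *\<^sub>R d"] assms by (simp add: algebra_simps)
  show ?thesis using 1 2 by (simp add: algebra_simps)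
qed

lemma gap_pos:
  fixes a b c d :: "real^'T"
  assumes "s > 0" "d \<noteq> 0" "\<not> aligned (a - b) (b - c)"
  shows "norm (b - a) + norm (c - b) < norm (b + d - a) + (1 + s) * norm d + norm (c - b + s *\<^sub>R d)"
proof (rule ccontr)
  assume neg: "\<not> ?thesis"
  have 1: "norm (b - a) \<le> norm (b + d - a) + norm d"
    using norm_triangle_ineq4[of "b + d - a" d] by (simp add: algebra_simps)
  have 2: "norm (c - b) \<le> norm (c - b + s *\<^sub>R d) + s * norm d"
    using norm_triangle_ineq4[of "c - b + s *\<^sub>R d" "s *\<^sub>R d"] assms by (simp add: algebra_simps)
  have e1: "norm (d + (a - b - d)) = norm d + norm (a - b - d)"
  proof -
    have "norm (a - b - d) = norm (b + d - a)" by (simp add: norm_minus_commute algebra_simps)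
    moreover have "norm (b - a) = norm (a - b)" by (simp_all add: norm_minus_commute)
    moreover have X: "d + (a - b - d) = a - b" by simp
    ultimately show ?thesis using 1 2 neg by (simp only: X distrib_right mult_1; linarith)
  qed
  have e2: "norm (s *\<^sub>R d + (b - c - s *\<^sub>R d)) = norm (s *\<^sub>R d) + norm (b - c - s *\<^sub>R d)"
  proof -
    have "norm (b - c - s *\<^sub>R d) = norm (c - b + s *\<^sub>R d)"
    proof -
      have "b - c - s *\<^sub>R d = - (c - b + s *\<^sub>R d)" by simp
      then show ?thesis by (simp only: norm_minus_cancel)
    qed
    moreover have "norm (b - a) = norm (a - b)" "norm (c - b) = norm (b - c)" by (simp_all add: norm_minus_commute)
    moreover have "norm (a - b - d) = norm (b + d - a)" by (simp add: norm_minus_commute algebra_simps)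
    moreover have "norm (s *\<^sub>R d) = s * norm d" using assms(1) by simp
    moreover have X: "s *\<^sub>R d + (b - c - s *\<^sub>R d) = b - c" by simp
    ultimately show ?thesis using 1 2 neg by (simp only: X distrib_right mult_1; linarith)
  qed
  obtain al where al: "al \<ge> 0" "a - b = al *\<^sub>R d" using tri_ray[OF assms(2) e1] by auto
  have "s *\<^sub>R d \<noteq> 0" using assms by simp
  obtain be where be: "be \<ge> 0" "b - c = be *\<^sub>R (s *\<^sub>R d)" using tri_ray[OF \<open>s *\<^sub>R d \<noteq> 0\<close> e2] by auto
  have "aligned (a - b) (b - c)"
  proof -
    have "inner (al *\<^sub>R d) (be *\<^sub>R (s *\<^sub>R d)) = al * be * s * (norm d * norm d)"
      by (simp add: power2_eq_square[symmetric] power2_norm_eq_inner)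
    moreover have "norm (al *\<^sub>R d) * norm (be *\<^sub>R (s *\<^sub>R d)) = al * be * s * (norm d * norm d)"
      using al(1) be(1) assms(1) by simp
    ultimately show ?thesis unfolding aligned_def al be by (simp only:)
  qed
  then show False using assms(3) by simp
qed

lemma core:
  fixes f :: "real \<Rightarrow> real^'T" and K :: nat and p :: "nat \<Rightarrow> real" and v :: "nat \<Rightarrow> real^'T"
    and A C :: "real^'T" and xt xt1 xt2 s :: real and a b c \<delta> :: "real^'T"
  assumes s_def: "s = (xt - xt1) / (xt2 - xt)"
    and fdef: "f = cnet K p v A C"
    and knot_xt: "\<exists>t. knot (\<lambda>x. f x $ t) xt"
    and ord: "xt1 < xt" "xt < xt2"
    and knot_xt1: "\<exists>t. knot (\<lambda>x. f x $ t) xt1"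
    and knot_xt2: "\<exists>t. knot (\<lambda>x. f x $ t) xt2"
    and slope_a: "(f has_vector_derivative a) (at_left xt1)"
    and slope_1: "\<And>y. y \<in> {xt1<..<xt} \<Longrightarrow> (f has_vector_derivative (b + \<delta>)) (at y)"
    and slope_2: "\<And>y. y \<in> {xt<..<xt2} \<Longrightarrow> (f has_vector_derivative (b - s *\<^sub>R \<delta>)) (at y)"
    and slope_c: "(f has_vector_derivative c) (at_right xt2)"
  shows "\<delta> \<noteq> 0 \<and> (\<exists>v'. (\<lambda>y. if y \<in> {xt1..xt2} then f xt1 + ((y - xt1) / (xt2 - xt1)) *\<^sub>R (f xt2 - f xt1) else f y)
      = cnet K p v' A C \<and>
      (\<Sum>k<K. norm (v' k)) + (norm (b + \<delta> - a) + (1 + s) * norm \<delta> + norm (c - b + s *\<^sub>R \<delta>) - norm (b - a) - norm (c - b))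
      \<le> (\<Sum>k<K. norm (v k)))"
proof -
  have s_pos: "s > 0" using ord by (simp add: s_def)
  have sx: "s * (xt2 - xt) = xt - xt1" using ord by (simp add: s_def)
  have cont: "continuous_on S f" for S unfolding fdef by (rule cnet_cont)
  have F1: "f y = f xt1 + (y - xt1) *\<^sub>R (b + \<delta>)" if "y \<in> {xt1..xt}" for y
    by (rule affine_piece[OF cont slope_1 that])
  have F2: "f y = f xt + (y - xt) *\<^sub>R (b - s *\<^sub>R \<delta>)" if "y \<in> {xt..xt2}" for y
    by (rule affine_piece[OF cont slope_2 that])
  have hx: "f xt = f xt1 + (xt - xt1) *\<^sub>R (b + \<delta>)" using F1[of xt] ord by simp
  have nontriv: "at_right (0::real) \<noteq> bot" by simp
  have evlt: "eventually (\<lambda>h::real. h < d) (at_right 0)" if "d > 0" for d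
    unfolding eventually_at_right_field using that by (intro exI[of _ d]) auto
  have dnz: "\<delta> \<noteq> 0"
  proof
    assume d0: "\<delta> = 0"
    obtain t where t: "knot (\<lambda>x. f x $ t) xt" using knot_xt by blast
    have "locally_affine_at (\<lambda>x. f x $ t) xt"
      unfolding locally_affine_at_def
    proof (intro exI conjI allI impI)
      show "min (xt - xt1) (xt2 - xt) > 0" using ord by simp
      fix y assume y: "\<bar>y - xt\<bar> < min (xt - xt1) (xt2 - xt)"
      show "f y $ t = b $ t * y + (f xt $ t - b $ t * xt)"
      proof (cases "y \<le> xt")
        case True
        then have "f y = f xt1 + (y - xt1) *\<^sub>R b" using F1[of y] y d0 by auto
        then have "f y $ t = f xt1 $ t + (y - xt1) * b $ t" by simp
        moreover have "f xt $ t = f xt1 $ t + (xt - xt1) * b $ t" using hx d0 by simp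
        ultimately show ?thesis by (simp add: algebra_simps)
      next
        case False
        then have "f y = f xt + (y - xt) *\<^sub>R b" using F2[of y] y d0 by auto
        then have "f y $ t = f xt $ t + (y - xt) * b $ t" by simp
        then show ?thesis by (simp add: algebra_simps)
      qed
    qed
    then show False using t by (simp add: knot_def)
  qed
  define J0 where "J0 = Jn K p v xt"
  define J1 where "J1 = Jn K p v xt1"
  define J2 where "J2 = Jn K p v xt2"
  have J0: "J0 = - ((1 + s) *\<^sub>R \<delta>)"
  proof -
    have "eventually (\<lambda>h. (h > 0 \<and> h < xt - xt1 \<and> h < xt2 - xt) \<and>
        cnet K p v A C (xt + h) - 2 *\<^sub>R cnet K p v A C xt + cnet K p v A C (xt - h) = h *\<^sub>R Jn K p v xt) (at_right 0)"
      using ev_pos evlt[of "xt - xt1"] evlt[of "xt2 - xt"] secdiff ord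
      by (intro eventually_conj) auto
    then obtain h where h: "h > 0" "h < xt - xt1" "h < xt2 - xt"
      "f (xt + h) - 2 *\<^sub>R f xt + f (xt - h) = h *\<^sub>R J0"
      using eventually_happens'[OF nontriv] unfolding fdef J0_def by blast
    have "f (xt + h) = f xt + h *\<^sub>R (b - s *\<^sub>R \<delta>)" using F2[of "xt + h"] h by simp
    moreover have "f (xt - h) = f xt1 + (xt - h - xt1) *\<^sub>R (b + \<delta>)" using F1[of "xt - h"] h by simp
    ultimately have "h *\<^sub>R J0 = h *\<^sub>R (- ((1 + s) *\<^sub>R \<delta>))"
      using h(4) hx by (simp add: vec_eq_iff algebra_simps, intro allI, (erule_tac x=i in allE)+, linarith)
    then show ?thesis using h(1) by (metis scaleR_cancel_left order_less_irrefl)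
  qed
  have J1: "J1 = b + \<delta> - a"
  proof -
    have "eventually (\<lambda>h. (h > 0 \<and> h < xt - xt1) \<and>
        cnet K p v A C (xt1 + h) - 2 *\<^sub>R cnet K p v A C xt1 + cnet K p v A C (xt1 - h) = h *\<^sub>R Jn K p v xt1) (at_right 0)"
      using ev_pos evlt[of "xt - xt1"] secdiff ord
      by (intro eventually_conj) auto
    then have ev: "eventually (\<lambda>h. (1/h) *\<^sub>R (f (xt1 - h) - f xt1 + h *\<^sub>R a) = J1 - (b + \<delta> - a)) (at_right 0)"
    proof (rule eventually_mono)
      fix h assume h: "(h > 0 \<and> h < xt - xt1) \<and>
        cnet K p v A C (xt1 + h) - 2 *\<^sub>R cnet K p v A C xt1 + cnet K p v A C (xt1 - h) = h *\<^sub>R Jn K p v xt1"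
      have "f (xt1 + h) = f xt1 + h *\<^sub>R (b + \<delta>)" using F1[of "xt1 + h"] h by simp
      moreover have "f (xt1 + h) - 2 *\<^sub>R f xt1 + f (xt1 - h) = h *\<^sub>R J1"
        using h unfolding fdef[symmetric] J1_def by blast
      ultimately have "f (xt1 - h) - f xt1 + h *\<^sub>R a = h *\<^sub>R (J1 - (b + \<delta> - a))"
        unfolding vec_eq_iff by (simp add: algebra_simps)
      then show "(1/h) *\<^sub>R (f (xt1 - h) - f xt1 + h *\<^sub>R a) = J1 - (b + \<delta> - a)" using h by simp
    qed
    have "((\<lambda>h. J1 - (b + \<delta> - a)) \<longlongrightarrow> 0) (at_right (0::real))"
      using tendsto_cong[OF ev, THEN iffD1, OF left_quot[OF slope_a]] .
    then have "J1 - (b + \<delta> - a) = 0" by (rule tendsto_const_iff[THEN iffD1, rotated]) simp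
    then show ?thesis by simp
  qed
  have J2: "J2 = c - b + s *\<^sub>R \<delta>"
  proof -
    have "eventually (\<lambda>h. (h > 0 \<and> h < xt2 - xt) \<and>
        cnet K p v A C (xt2 + h) - 2 *\<^sub>R cnet K p v A C xt2 + cnet K p v A C (xt2 - h) = h *\<^sub>R Jn K p v xt2) (at_right 0)"
      using ev_pos evlt[of "xt2 - xt"] secdiff ord
      by (intro eventually_conj) auto
    then have ev: "eventually (\<lambda>h. (1/h) *\<^sub>R (f (xt2 + h) - f xt2 - h *\<^sub>R c) = J2 - (c - b + s *\<^sub>R \<delta>)) (at_right 0)"
    proof (rule eventually_mono)
      fix h assume h: "(h > 0 \<and> h < xt2 - xt) \<and>
        cnet K p v A C (xt2 + h) - 2 *\<^sub>R cnet K p v A C xt2 + cnet K p v A C (xt2 - h) = h *\<^sub>R Jn K p v xt2"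
      have "f (xt2 - h) = f xt + (xt2 - h - xt) *\<^sub>R (b - s *\<^sub>R \<delta>)" using F2[of "xt2 - h"] h by simp
      moreover have "f xt2 = f xt + (xt2 - xt) *\<^sub>R (b - s *\<^sub>R \<delta>)" using F2[of "xt2"] ord by simp
      moreover have "f (xt2 + h) - 2 *\<^sub>R f xt2 + f (xt2 - h) = h *\<^sub>R J2"
        using h unfolding fdef[symmetric] J2_def by blast
      ultimately have "f (xt2 + h) - f xt2 - h *\<^sub>R c = h *\<^sub>R (J2 - (c - b + s *\<^sub>R \<delta>))"
        by (simp add: vec_eq_iff algebra_simps, intro allI, (erule_tac x=i in allE)+, linarith)
      then show "(1/h) *\<^sub>R (f (xt2 + h) - f xt2 - h *\<^sub>R c) = J2 - (c - b + s *\<^sub>R \<delta>)" using h by simp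
    qed
    have "((\<lambda>h. J2 - (c - b + s *\<^sub>R \<delta>)) \<longlongrightarrow> 0) (at_right (0::real))"
      using tendsto_cong[OF ev, THEN iffD1, OF right_quot[OF slope_c]] .
    then have "J2 - (c - b + s *\<^sub>R \<delta>) = 0" by (rule tendsto_const_iff[THEN iffD1, rotated]) simp
    then show ?thesis by simp
  qed
  obtain k1 where k1: "k1 < K" "p k1 = xt1"
  proof (rule ccontr)
    assume "\<not> thesis"
    then have "\<forall>k<K. p k \<noteq> xt1" using that by blast
    then show False using noknot[of K p xt1] knot_xt1 unfolding fdef knot_def by blast
  qed
  obtain k2 where k2: "k2 < K" "p k2 = xt2"
  proof (rule ccontr)
    assume "\<not> thesis"
    then have "\<forall>k<K. p k \<noteq> xt2" using that by blast
    then show False using noknot[of K p xt2] knot_xt2 unfolding fdef knot_def by blast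
  qed
  have dist: "xt1 \<noteq> xt" "xt \<noteq> xt2" "xt1 \<noteq> xt2" using ord by auto
  define v' where "v' k = (if p k = xt1 then (if k = k1 then b - a else 0) else if p k = xt then 0
      else if p k = xt2 then (if k = k2 then c - b else 0) else v k)" for k
  have vdec: "v' k = v k - (if p k = xt1 then v k else 0) - (if p k = xt then v k else 0) - (if p k = xt2 then v k else 0)
      + (if k = k1 then b - a else 0) + (if k = k2 then c - b else 0)" for k
    using k1 k2 dist by (auto simp: v'_def)
  have ndec: "norm (v' k) = norm (v k) - (if p k = xt1 then norm (v k) else 0) - (if p k = xt then norm (v k) else 0)
      - (if p k = xt2 then norm (v k) else 0)
      + (if k = k1 then norm (b - a) else 0) + (if k = k2 then norm (c - b) else 0)" for k
    using k1 k2 dist by (auto simp: v'_def)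
  have sumif: "(\<Sum>k<K. ramp (y - p k) *\<^sub>R (if p k = q then v k else 0)) = ramp (y - q) *\<^sub>R Jn K p v q" for y q
    unfolding Jn_def scaleR_sum_right by (rule sum.cong) auto
  have sumd: "(\<Sum>k<K. ramp (y - p k) *\<^sub>R (if k = kk then u else 0)) = ramp (y - p kk) *\<^sub>R u" if "kk < K" for y kk and u :: "real^'T"
  proof -
    have "(\<Sum>k<K. ramp (y - p k) *\<^sub>R (if k = kk then u else 0)) = (\<Sum>k<K. if k = kk then ramp (y - p kk) *\<^sub>R u else 0)"
      by (rule sum.cong) auto
    then show ?thesis using that by simp
  qed
  have cv': "cnet K p v' A C y = f y - ramp (y - xt1) *\<^sub>R J1 - ramp (y - xt) *\<^sub>R J0 - ramp (y - xt2) *\<^sub>R J2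
      + ramp (y - xt1) *\<^sub>R (b - a) + ramp (y - xt2) *\<^sub>R (c - b)" for y
  proof -
    have "(\<Sum>k<K. ramp (y - p k) *\<^sub>R v' k) = (\<Sum>k<K. ramp (y - p k) *\<^sub>R v k)
       - (\<Sum>k<K. ramp (y - p k) *\<^sub>R (if p k = xt1 then v k else 0))
       - (\<Sum>k<K. ramp (y - p k) *\<^sub>R (if p k = xt then v k else 0))
       - (\<Sum>k<K. ramp (y - p k) *\<^sub>R (if p k = xt2 then v k else 0))
       + (\<Sum>k<K. ramp (y - p k) *\<^sub>R (if k = k1 then b - a else 0))
       + (\<Sum>k<K. ramp (y - p k) *\<^sub>R (if k = k2 then c - b else 0))"
      unfolding vdec by (simp only: scaleR_right_diff_distrib scaleR_right_distrib sum.distrib sum_subtractf)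
    then show ?thesis unfolding fdef cnet_def sumif sumd[OF k1(1)] sumd[OF k2(1)] k1(2) k2(2) J0_def J1_def J2_def
      by (simp add: algebra_simps)
  qed
  have FB: "f xt2 - f xt1 = (xt2 - xt1) *\<^sub>R b"
  proof -
    have "f xt2 $ i - f xt1 $ i = (xt2 - xt1) * b $ i" for i
    proof -
      have A: "f xt2 $ i = f xt $ i + (xt2 - xt) * (b $ i - s * \<delta> $ i)" using F2[of xt2] ord by simp
      have B: "f xt $ i = f xt1 $ i + (xt - xt1) * (b $ i + \<delta> $ i)" using hx by simp
      show ?thesis using A B sx by algebra
    qed
    then show ?thesis by (simp add: vec_eq_iff)
  qed
  have sxd: "\<forall>i. s * (xt2 - xt) * \<delta> $ i = (xt - xt1) * \<delta> $ i" using sx by simp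
  have geq: "(\<lambda>y. if y \<in> {xt1..xt2} then f xt1 + ((y - xt1) / (xt2 - xt1)) *\<^sub>R (f xt2 - f xt1) else f y)
      = cnet K p v' A C"
  proof
    fix y
    have g1: "((y - xt1) / (xt2 - xt1)) *\<^sub>R (f xt2 - f xt1) = (y - xt1) *\<^sub>R b"
      unfolding FB using ord by simp
    consider "y < xt1" | "xt1 \<le> y" "y \<le> xt" | "xt < y" "y \<le> xt2" | "xt2 < y" by linarith
    then show "(if y \<in> {xt1..xt2} then f xt1 + ((y - xt1) / (xt2 - xt1)) *\<^sub>R (f xt2 - f xt1) else f y)
      = cnet K p v' A C y"
    proof cases
      case 1
      then show ?thesis unfolding cv' using ord by (simp add: ramp_def)
    next
      case 2
      then have r: "ramp (y - xt1) = y - xt1" "ramp (y - xt) = 0" "ramp (y - xt2) = 0" using ord by (auto simp: ramp_def)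
      have fy: "f y = f xt1 + (y - xt1) *\<^sub>R (b + \<delta>)" using F1[of y] 2 by simp
      show ?thesis unfolding cv' r g1 J1 using 2 ord fy
        by (simp add: vec_eq_iff algebra_simps)
    next
      case 3
      then have r: "ramp (y - xt1) = y - xt1" "ramp (y - xt) = y - xt" "ramp (y - xt2) = 0" using ord by (auto simp: ramp_def)
      have fy: "f y = f xt + (y - xt) *\<^sub>R (b - s *\<^sub>R \<delta>)" using F2[of y] 3 by simp
      have "(f xt1 + (y - xt1) *\<^sub>R b) $ i = (f y - (y - xt1) *\<^sub>R (b + \<delta> - a) - (y - xt) *\<^sub>R - ((1 + s) *\<^sub>R \<delta>) -
            0 *\<^sub>R J2 + (y - xt1) *\<^sub>R (b - a) + 0 *\<^sub>R (c - b)) $ i" for i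
      proof -
        have A: "f y $ i = f xt $ i + (y - xt) * (b $ i - s * \<delta> $ i)" using fy by simp
        have B: "f xt $ i = f xt1 $ i + (xt - xt1) * (b $ i + \<delta> $ i)" using hx by simp
        show ?thesis using A B by simp (simp add: algebra_simps)
      qed
      then show ?thesis unfolding cv' r g1 J1 J0 using 3 ord by (simp add: vec_eq_iff)
    next
      case 4
      then have r: "ramp (y - xt1) = y - xt1" "ramp (y - xt) = y - xt" "ramp (y - xt2) = y - xt2" using ord by (auto simp: ramp_def)
      have "f y $ i = (f y - (y - xt1) *\<^sub>R (b + \<delta> - a) - (y - xt) *\<^sub>R - ((1 + s) *\<^sub>R \<delta>) -
            (y - xt2) *\<^sub>R (c - b + s *\<^sub>R \<delta>) + (y - xt1) *\<^sub>R (b - a) + (y - xt2) *\<^sub>R (c - b)) $ i" for i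
        using sx by simp algebra
      then show ?thesis unfolding cv' r J1 J0 J2 using 4 ord by (simp add: vec_eq_iff)
    qed
  qed
  have Nb: "norm (Jn K p v q) \<le> (\<Sum>k<K. if p k = q then norm (v k) else 0)" for q
  proof -
    have "norm (Jn K p v q) \<le> (\<Sum>k<K. norm (if p k = q then v k else 0))"
      unfolding Jn_def by (rule norm_sum)
    also have "\<dots> = (\<Sum>k<K. if p k = q then norm (v k) else 0)" by (rule sum.cong) auto
    finally show ?thesis .
  qed
  have sumn: "(\<Sum>k<K. norm (v' k)) = (\<Sum>k<K. norm (v k)) - (\<Sum>k<K. if p k = xt1 then norm (v k) else 0)
      - (\<Sum>k<K. if p k = xt then norm (v k) else 0) - (\<Sum>k<K. if p k = xt2 then norm (v k) else 0)
      + norm (b - a) + norm (c - b)"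
    unfolding ndec using k1 k2 by (simp add: sum.distrib sum_subtractf)
  have nJ0: "norm J0 = (1 + s) * norm \<delta>" unfolding J0 using s_pos by simp
  have "(\<Sum>k<K. norm (v' k)) + (norm (b + \<delta> - a) + (1 + s) * norm \<delta> + norm (c - b + s *\<^sub>R \<delta>) - norm (b - a) - norm (c - b))
      \<le> (\<Sum>k<K. norm (v k))"
    using sumn Nb[of xt1] Nb[of xt] Nb[of xt2] nJ0 unfolding J0_def[symmetric] J1_def[symmetric] J2_def[symmetric] J1 J2
    by linarith
  then show ?thesis using dnz geq by blast
qed

theorem lemma1:
  fixes f :: "real \<Rightarrow> real^'T" and K N :: nat
    and xs :: "nat \<Rightarrow> real" and ys :: "nat \<Rightarrow> real^'T"
    and xt xt1 xt2 \<tau> :: real and a b c \<delta> :: "real^'T"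
  assumes cpwl: "\<And>t. cpwl (\<lambda>x. f x $ t)"
    and interp: "\<And>i. i \<in> {1..N} \<Longrightarrow> f (xs i) = ys i"
    and between: "\<exists>i\<in>{1..N}. \<exists>j\<in>{1..N}. xs i < xt \<and> xt < xs j
                   \<and> (\<forall>k\<in>{1..N}. xs k \<notin> {xs i<..<xs j})"
    and knot_xt: "\<exists>t. knot (\<lambda>x. f x $ t) xt"
    and ord: "xt1 < xt" "xt < xt2"
    and knot_xt1: "\<exists>t. knot (\<lambda>x. f x $ t) xt1"
    and knot_xt2: "\<exists>t. knot (\<lambda>x. f x $ t) xt2"
    and closest: "\<And>t y. y \<in> {xt1<..<xt} \<union> {xt<..<xt2} \<Longrightarrow> \<not> knot (\<lambda>x. f x $ t) y"
    and tau: "\<tau> = (xt - xt1) / (xt2 - xt1)"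
    and slope_a: "(f has_vector_derivative a) (at_left xt1)"
    and slope_1: "\<And>y. y \<in> {xt1<..<xt} \<Longrightarrow> (f has_vector_derivative (b + \<delta>)) (at y)"
    and slope_2: "\<And>y. y \<in> {xt<..<xt2} \<Longrightarrow>
                    (f has_vector_derivative (b - (\<tau> / (1 - \<tau>)) *\<^sub>R \<delta>)) (at y)"
    and slope_c: "(f has_vector_derivative c) (at_right xt2)"
  shows "(let g = (\<lambda>y. if y \<in> {xt1..xt2}
                         then f xt1 + ((y - xt1) / (xt2 - xt1)) *\<^sub>R (f xt2 - f xt1)
                         else f y)
          in repcost K g \<le> repcost K f
             \<and> (\<not> aligned (a - b) (b - c) \<and> repcost K f < \<infinity> \<longrightarrow> repcost K g < repcost K f))"
proof -
  define s where "s = (xt - xt1) / (xt2 - xt)"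
  define g where "g = (\<lambda>y. if y \<in> {xt1..xt2}
                         then f xt1 + ((y - xt1) / (xt2 - xt1)) *\<^sub>R (f xt2 - f xt1)
                         else f y)"
  define gap where "gap = norm (b + \<delta> - a) + (1 + s) * norm \<delta> + norm (c - b + s *\<^sub>R \<delta>) - norm (b - a) - norm (c - b)"
  define Sf where "Sf = {(w, b, v, a0, c0). (\<forall>k<K. \<bar>w k\<bar> = 1) \<and> f = netfun K w b v a0 c0}"
  define Sg where "Sg = {(w, b, v, a0, c0). (\<forall>k<K. \<bar>w k\<bar> = 1) \<and> g = netfun K w b v a0 c0}"
  define cost :: "(nat \<Rightarrow> real) \<times> (nat \<Rightarrow> real) \<times> (nat \<Rightarrow> (real^'T)) \<times> (real^'T) \<times> (real^'T) \<Rightarrow> ereal"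
    where "cost = (\<lambda>p. case p of (w, b, v, a0, c0) \<Rightarrow> ereal (\<Sum>k<K. norm (v k)))"
  have rf: "repcost K f = (INF p\<in>Sf. cost p)" unfolding repcost_def Sf_def cost_def by simp
  have rg: "repcost K g = (INF p\<in>Sg. cost p)" unfolding repcost_def Sg_def cost_def by simp
  have s_pos: "s > 0" using ord by (simp add: s_def)
  have ts: "\<tau> / (1 - \<tau>) = s"
  proof -
    have n1: "xt2 - xt1 \<noteq> 0" "xt2 - xt \<noteq> 0" using ord by auto
    have "1 - \<tau> = (xt2 - xt) / (xt2 - xt1)" unfolding tau using n1 by (simp add: field_simps)
    then show ?thesis unfolding s_def using n1 by (simp add: tau)
  qed
  have slope_2': "\<And>y. y \<in> {xt<..<xt2} \<Longrightarrow> (f has_vector_derivative (b - s *\<^sub>R \<delta>)) (at y)"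
    using slope_2 ts by simp
  have main: "\<delta> \<noteq> 0 \<and> (\<exists>q\<in>Sg. cost q + ereal gap \<le> cost p)" if "p \<in> Sf" for p
  proof -
    obtain w bb v a0 c0 where p1: "p = (w, bb, v, a0, c0)" by (cases p)
    have p23: "\<forall>k<K. \<bar>w k\<bar> = 1" "f = netfun K w bb v a0 c0"
      using that unfolding Sf_def p1 by auto
    note p = p1 p23
    define A where "A = a0 - (\<Sum>k<K. if w k = -1 then v k else 0)"
    define C where "C = c0 + (\<Sum>k<K. if w k = -1 then bb k *\<^sub>R v k else 0)"
    have fc: "f = cnet K (\<lambda>k. - bb k * w k) v A C"
      using p net_to_cnet[OF p(2)] unfolding A_def C_def by simp
    from core[OF s_def fc knot_xt ord knot_xt1 knot_xt2 slope_a slope_1 slope_2' slope_c]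
    obtain v' where dnz: "\<delta> \<noteq> 0" and gv: "g = cnet K (\<lambda>k. - bb k * w k) v' A C"
      and cst: "(\<Sum>k<K. norm (v' k)) + gap \<le> (\<Sum>k<K. norm (v k))"
      unfolding g_def gap_def by blast
    have "((\<lambda>_. 1), (\<lambda>k. - (- bb k * w k)), v', A, C) \<in> Sg"
      unfolding Sg_def using gv cnet_to_net[of K "\<lambda>k. - bb k * w k" v' A C] by simp
    moreover have "cost ((\<lambda>_. 1), (\<lambda>k. - (- bb k * w k)), v', A, C) + ereal gap \<le> cost p"
      using cst unfolding cost_def p(1) by simp
    ultimately show ?thesis using dnz by blast
  qed
  have costnn: "cost q \<ge> 0" for q unfolding cost_def by (auto split: prod.splits intro: sum_nonneg)
  have ineq: "repcost K g \<le> repcost K f \<and> (\<not> aligned (a - b) (b - c) \<longrightarrow> repcost K g < repcost K f)"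
    if ne: "Sf \<noteq> {}"
  proof -
    obtain p0 where p0: "p0 \<in> Sf" using ne by blast
    obtain q0 where q0: "q0 \<in> Sg" "cost q0 + ereal gap \<le> cost p0" using main[OF p0] by blast
    have dnz: "\<delta> \<noteq> 0" using main[OF p0] by blast
    have gnn: "gap \<ge> 0" unfolding gap_def using gap_nonneg[of s b a c \<delta>] s_pos by simp
    have "repcost K g \<le> cost q0" unfolding rg using q0(1) by (rule INF_lower)
    moreover have "cost q0 \<noteq> \<infinity>" unfolding cost_def by (auto split: prod.splits)
    moreover have "repcost K g \<ge> 0" unfolding rg using costnn by (intro INF_greatest) auto
    ultimately obtain r where r: "repcost K g = ereal r" by (cases "repcost K g") auto
    have "ereal (r + gap) \<le> cost p" if pS: "p \<in> Sf" for p
    proof -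
      obtain q where q: "q \<in> Sg" "cost q + ereal gap \<le> cost p" using main[OF pS] by blast
      have "ereal r \<le> cost q" unfolding r[symmetric] rg using q(1) by (rule INF_lower)
      then have "ereal r + ereal gap \<le> cost q + ereal gap" by (rule add_right_mono)
      then show ?thesis using q(2) by simp
    qed
    then have le: "ereal (r + gap) \<le> repcost K f" unfolding rf by (rule INF_greatest)
    have "repcost K g \<le> repcost K f" using le gnn r by (metis ereal_less_eq(3) le_add_same_cancel1 order_trans)
    moreover have "repcost K g < repcost K f" if "\<not> aligned (a - b) (b - c)"
    proof -
      have "gap > 0" unfolding gap_def using gap_pos[OF s_pos dnz that] by simp
      then have "ereal r < ereal (r + gap)" by simp
      then show ?thesis using le r by (metis order_less_le_trans)
    qed
    ultimately show ?thesis by blast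
  qed
  have "repcost K g \<le> repcost K f \<and> (\<not> aligned (a - b) (b - c) \<and> repcost K f < \<infinity> \<longrightarrow> repcost K g < repcost K f)"
  proof (cases "Sf = {}")
    case True
    then have "repcost K f = \<infinity>" unfolding rf by (simp add: top_ereal_def)
    then show ?thesis by simp
  next
    case False
    then show ?thesis using ineq by blast
  qed
  then show ?thesis unfolding g_def Let_def by simp
qed

end
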